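(* For every $k\ge0$, $F_k$ equals the $(I_0,I_0)$ entry of the matrix $\mathbf T^k$, where $I_0=[0,a-1]$.
   Context: Let $S$ be a finite set of integers with $a:=\max S\ge 1$ and $b:=-\min S\ge 1$. Each $s\in S$ carries a weight $\omega_s$ in a field $K$ of characteristic $0$; set $\omega_s:=0$ for $s\in\mathbb Z\setminus S$, and for $s\in\mathbb Z$ put $\beta_s:=\delta_{s,0}-\omega_s$. For $k\ge0$, $A_k$ is the $(k+1)\times(k+1)$ matrix with rows and columns indexed by $0,\dots,k$ whose $(i,j)$ entry is $\omega_{j-i}$. Put $F_0:=1$ and $F_k:=\det(1-A_{k-1})$ for $k\ge1$. Notation: $[m,n]:=\{i\in\mathbb Z: m\le i\le n\}$, $X+c:=\{x+c:x\in X\}$; an $n$-subset is a subset of cardinality $n$. For a finite set $I\subseteq\mathbb Z$ and $s\in\mathbb Z$, $\epsilon_s(I):=(-1)^{\#\{i\in I:\ i<s\}}$. $\mathbf T$ is the square matrix with rows and columns indexed by the $a$-subsets of $[-b,a-1]$ and entries $\mathbf T[I,J]:=\epsilon_s(I)\beta_s$ if there is an integer $s$ with $I\cup\{a\}=(J+1)\cup\{s\}$ (such $s$ is then unique), and $\mathbf T[I,J]:=0$ otherwise. *)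

theory Defs
  imports "Jordan_Normal_Form.Determinant"
begin

definition beta :: "(int \<Rightarrow> 'a::field_char_0) \<Rightarrow> int \<Rightarrow> 'a" where
  "beta \<omega> s = (if s = 0 then 1 else 0) - \<omega> s"

definition Amat :: "(int \<Rightarrow> 'a::field_char_0) \<Rightarrow> nat \<Rightarrow> 'a mat" where
  "Amat \<omega> k = mat (k+1) (k+1) (\<lambda>(i,j). \<omega> (int j - int i))"

definition Fseq :: "(int \<Rightarrow> 'a::field_char_0) \<Rightarrow> nat \<Rightarrow> 'a" where
  "Fseq \<omega> k = (if k = 0 then 1 else det (1\<^sub>m k - Amat \<omega> (k - 1)))"

definition eps :: "int \<Rightarrow> int set \<Rightarrow> 'a::field_char_0" where
  "eps s I = (-1) ^ card {i \<in> I. i < s}"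

definition shift :: "int set \<Rightarrow> int \<Rightarrow> int set" where
  "shift X c = (\<lambda>x. x + c) ` X"

definition Tidx :: "int \<Rightarrow> int \<Rightarrow> int set set" where
  "Tidx a b = {I. I \<subseteq> {-b..a-1} \<and> card I = nat a}"

definition Tmat :: "(int \<Rightarrow> 'a::field_char_0) \<Rightarrow> int \<Rightarrow> int set \<Rightarrow> int set \<Rightarrow> 'a" where
  "Tmat \<omega> a I J =
     (if \<exists>s. insert a I = insert s (shift J 1)
      then (let s = (THE s. insert a I = insert s (shift J 1)) in eps s I * beta \<omega> s)
      else 0)"

fun matpow :: "'i set \<Rightarrow> ('i \<Rightarrow> 'i \<Rightarrow> 'a::comm_semiring_1) \<Rightarrow> nat \<Rightarrow> 'i \<Rightarrow> 'i \<Rightarrow> 'a" where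
  "matpow D M 0 I J = (if I = J then 1 else 0)"
| "matpow D M (Suc k) I J = (\<Sum>L\<in>D. matpow D M k I L * M L J)"

end

theory Submission imports Defs begin

definition colf :: "int set \<Rightarrow> nat \<Rightarrow> int" where
  "colf C j = sorted_list_of_set C ! j"

lemma colf_in: "finite C \<Longrightarrow> j < card C \<Longrightarrow> colf C j \<in> C"
  by (metis colf_def length_sorted_list_of_set nth_mem set_sorted_list_of_set)

lemma colf_mono: "finite C \<Longrightarrow> i < j \<Longrightarrow> j < card C \<Longrightarrow> colf C i < colf C j"
  unfolding colf_def
  by (metis length_sorted_list_of_set sorted_wrt_nth_less strict_sorted_list_of_set)

lemma colf_inj: "finite C \<Longrightarrow> inj_on (colf C) {..<card C}"
  unfolding inj_on_def
  by (metis colf_mono lessThan_iff linorder_neqE_nat order_less_irrefl)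

lemma colf_surj: "finite C \<Longrightarrow> colf C ` {..<card C} = C"
proof -
  assume f: "finite C"
  have "C = set (sorted_list_of_set C)" using f by simp
  also have "\<dots> = (\<lambda>i. sorted_list_of_set C ! i) ` {..<length (sorted_list_of_set C)}"
    by (auto simp: set_conv_nth)
  finally show ?thesis using f by (simp add: colf_def)
qed

lemma colf_idx: assumes f: "finite C" and j: "j < card C"
  shows "card {x\<in>C. x < colf C j} = j"
proof -
  have "{x\<in>C. x < colf C j} = colf C ` {..<j}"
  proof
    show "{x \<in> C. x < colf C j} \<subseteq> colf C ` {..<j}"
    proof
      fix x assume x: "x \<in> {x \<in> C. x < colf C j}"
      then obtain i where i: "i < card C" "x = colf C i" using colf_surj[OF f] by blast
      have "i < j"
      proof (rule ccontr)
        assume "\<not> i < j"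
        then have "j = i \<or> j < i" by auto
        then show False using colf_mono[OF f, of j i] i x j by auto
      qed
      then show "x \<in> colf C ` {..<j}" using i by auto
    qed
  next
    show "colf C ` {..<j} \<subseteq> {x \<in> C. x < colf C j}"
      using colf_mono[OF f] colf_in[OF f] j by auto
  qed
  moreover have "inj_on (colf C) {..<j}"
    by (rule inj_on_subset[OF colf_inj[OF f]]) (use j in auto)
  ultimately show ?thesis by (simp add: card_image)
qed

lemma remove1_nth_distinct:
  assumes "distinct xs" "j < length xs"
  shows "remove1 (xs!j) xs = take j xs @ drop (Suc j) xs"
proof -
  have e: "xs = take j xs @ xs!j # drop (Suc j) xs" using assms(2) by (rule id_take_nth_drop)
  have "xs!j \<notin> set (take j xs)" using assms e
    by (metis distinct_append distinct.simps(2) disjoint_iff list.set_intros(1))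
  then have "remove1 (xs!j) (take j xs @ xs!j # drop (Suc j) xs) = take j xs @ drop (Suc j) xs"
    by (simp add: remove1_append)
  then show ?thesis using e by metis
qed

lemma colf_remove:
  assumes f: "finite C" and j: "j < card C" and r: "r < card C - 1"
  shows "colf (C - {colf C j}) r = colf C (insert_index j r)"
proof -
  define xs where "xs = sorted_list_of_set C"
  have "sorted_list_of_set (C - {xs!j}) = remove1 (xs!j) xs"
    using f by (simp add: sorted_list_of_set_remove xs_def)
  also have "\<dots> = take j xs @ drop (Suc j) xs"
    using j f by (intro remove1_nth_distinct) (auto simp: xs_def)
  finally have e: "sorted_list_of_set (C - {xs!j}) = take j xs @ drop (Suc j) xs" .
  have lx: "length xs = card C" using f by (simp add: xs_def)
  have cj: "colf C j = xs ! j" by (simp add: colf_def xs_def)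
  show ?thesis
    unfolding cj unfolding colf_def unfolding e unfolding xs_def[symmetric] insert_index_def
    using j r lx by (auto simp: nth_append min_def)
qed

definition Dm :: "(int \<Rightarrow> 'a::field_char_0) \<Rightarrow> nat \<Rightarrow> int set \<Rightarrow> 'a mat" where
  "Dm \<omega> k C = mat k k (\<lambda>(i,j). beta \<omega> (colf C j - int i))"

definition Dc :: "(int \<Rightarrow> 'a::field_char_0) \<Rightarrow> nat \<Rightarrow> int set \<Rightarrow> 'a" where
  "Dc \<omega> k C = (if card C = k then det (Dm \<omega> k C) else 0)"

lemma Dm_carrier[simp]: "Dm \<omega> k C \<in> carrier_mat k k"
  by (simp add: Dm_def)

lemma Dm_delete:
  assumes f: "finite C" and c: "card C = Suc k" and j: "j < Suc k"
  shows "mat_delete (Dm \<omega> (Suc k) C) k j = Dm \<omega> k (C - {colf C j})"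
proof (rule eq_matI)
  fix i' j' assume i': "i' < dim_row (Dm \<omega> k (C - {colf C j}))"
    and j': "j' < dim_col (Dm \<omega> k (C - {colf C j}))"
  then have i'k: "i' < k" and j'k: "j' < k" by (auto simp: Dm_def)
  have "colf (C - {colf C j}) j' = colf C (insert_index j j')"
    using colf_remove[OF f, of j j'] c j j'k by simp
  moreover have "insert_index j j' < Suc k" using j'k by (simp add: insert_index_def)
  ultimately show "mat_delete (Dm \<omega> (Suc k) C) k j $$ (i', j') = Dm \<omega> k (C - {colf C j}) $$ (i', j')"
    using i'k j'k by (simp add: mat_delete_def Dm_def insert_index_def)
qed (auto simp: Dm_def mat_delete_def)

lemma det_expand:
  assumes f: "finite C" and c: "card C = Suc k"
  shows "det (Dm \<omega> (Suc k) C) = (\<Sum>x\<in>C. beta \<omega> (x - int k) * (-1)^(k + card {y\<in>C. y < x}) * det (Dm \<omega> k (C - {x})))"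
proof -
  define g where "g x = beta \<omega> (x - int k) * (-1)^(k + card {y\<in>C. y < x}) * det (Dm \<omega> k (C - {x}))" for x
  have "det (Dm \<omega> (Suc k) C) = (\<Sum>j<Suc k. Dm \<omega> (Suc k) C $$ (k,j) * cofactor (Dm \<omega> (Suc k) C) k j)"
    by (rule laplace_expansion_row) auto
  also have "\<dots> = (\<Sum>j<Suc k. g (colf C j))"
  proof (rule sum.cong[OF refl])
    fix j assume j: "j \<in> {..<Suc k}"
    then have jl: "j < card C" using c by simp
    show "Dm \<omega> (Suc k) C $$ (k,j) * cofactor (Dm \<omega> (Suc k) C) k j = g (colf C j)"
      unfolding g_def cofactor_def Dm_delete[OF f c j[simplified]] colf_idx[OF f jl]
      using j by (simp add: Dm_def add.commute mult.assoc)
  qed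
  also have "\<dots> = sum g (colf C ` {..<card C})"
    using sum.reindex[OF colf_inj[OF f], of g] c by (simp del: sum.lessThan_Suc)
  also have "\<dots> = sum g C" by (simp add: colf_surj[OF f])
  finally show ?thesis unfolding g_def .
qed

lemma det_zero_column:
  assumes f: "finite C" and c: "card C = k" and x: "x \<in> C"
    and z: "\<And>i. i < k \<Longrightarrow> beta \<omega> (x - int i) = 0"
  shows "det (Dm \<omega> k C) = 0"
proof -
  obtain j where j: "j < card C" "x = colf C j" using x colf_surj[OF f] by blast
  have "det (Dm \<omega> k C) = (\<Sum>i<k. Dm \<omega> k C $$ (i,j) * cofactor (Dm \<omega> k C) i j)"
    by (rule laplace_expansion_column) (use j c in auto)
  also have "\<dots> = 0"
    by (rule sum.neutral) (use j c z in \<open>auto simp: Dm_def\<close>)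
  finally show ?thesis .
qed

definition pm :: "int \<Rightarrow> 'a::field_char_0" where "pm x = (if even x then 1 else -1)"

lemma pm_add: "pm (x + y) = pm x * pm y"
  by (auto simp: pm_def)

lemma pm_diff: "pm (x - y) = pm x * pm y"
  by (auto simp: pm_def)

lemma pm_sq: "pm x * pm x = 1"
  by (auto simp: pm_def)

lemma pm_pow: "(-1::'a::field_char_0) ^ n = pm (int n)"
  by (auto simp: pm_def)

definition sg :: "nat \<Rightarrow> int set \<Rightarrow> 'a::field_char_0" where
  "sg k C = (\<Prod>c\<in>C. pm c) * (\<Prod>i<k. pm (int i))"

definition Ck :: "int \<Rightarrow> nat \<Rightarrow> int set \<Rightarrow> int set" where
  "Ck a k L = {0..int k + a - 1} - shift L (int k)"

lemma shift_mem[simp]: "x \<in> shift X c \<longleftrightarrow> x - c \<in> X"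
  by (force simp: shift_def image_iff)

lemma finite_Ck[simp]: "finite (Ck a k L)"
  by (simp add: Ck_def)

lemma card_shift: "card (shift X c) = card X"
  unfolding shift_def by (rule card_image) (simp add: inj_on_def)

context
  fixes \<omega> :: "int \<Rightarrow> 'a::field_char_0" and a b :: int
  assumes a1: "a \<ge> 1" and b1: "b \<ge> 1" and wz: "\<And>s. s < -b \<or> s > a \<Longrightarrow> \<omega> s = 0"
begin

lemma beta_z: "s < -b \<or> s > a \<Longrightarrow> beta \<omega> s = 0"
  using a1 b1 wz[of s] by (auto simp: beta_def)

lemma Tidx_D: assumes "L \<in> Tidx a b" shows "finite L" "card L = nat a" "\<And>x. x \<in> L \<Longrightarrow> -b \<le> x \<and> x \<le> a - 1"
  using assms by (auto simp: Tidx_def intro: finite_subset)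

lemma card_Ck:
  assumes L: "L \<in> Tidx a b"
  shows "card (Ck a k L) = k \<longleftrightarrow> (\<forall>x\<in>L. - int k \<le> x)"
proof -
  define A where "A = {0..int k + a - 1}"
  define B where "B = shift L (int k)"
  have fA: "finite A" and fB: "finite B" using Tidx_D[OF L] by (auto simp: A_def B_def shift_def)
  have cA: "card A = k + nat a" using a1 by (simp add: A_def)
  have cB: "card B = nat a" using Tidx_D[OF L] by (simp add: B_def card_shift)
  have cD: "card (Ck a k L) = card A - card (A \<inter> B)"
    unfolding Ck_def A_def[symmetric] B_def[symmetric] by (rule card_Diff_subset_Int) (use fA in auto)
  show ?thesis
  proof
    assume h: "card (Ck a k L) = k"
    show "\<forall>x\<in>L. - int k \<le> x"
    proof (rule ccontr)
      assume "\<not> (\<forall>x\<in>L. - int k \<le> x)"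
      then obtain x where x: "x \<in> L" "x < - int k" by auto
      have "x + int k \<in> B - A" using x by (simp add: A_def B_def)
      then have "A \<inter> B \<subset> B" by blast
      then have "card (A \<inter> B) < card B" using fB by (simp add: psubset_card_mono)
      then show False using h cD cA cB by linarith
    qed
  next
    assume h: "\<forall>x\<in>L. - int k \<le> x"
    have "A \<inter> B = B" using h Tidx_D(3)[OF L] by (force simp: A_def B_def)
    then show "card (Ck a k L) = k" using cD cA cB by simp
  qed
qed

context
  fixes J L :: "int set" and s :: int
  assumes J: "J \<in> Tidx a b" and L: "L \<in> Tidx a b" and H: "insert a L = insert s (shift J 1)"
begin

lemma memH: "y = a \<or> y \<in> L \<longleftrightarrow> y = s \<or> y - 1 \<in> J"
  using H by (metis insert_iff shift_mem)

lemma aL: "a \<notin> L" using Tidx_D(3)[OF L] by force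

lemma s_notin: "s - 1 \<notin> J"
proof
  assume "s - 1 \<in> J"
  then have e: "insert a L = shift J 1" using H by auto
  have "card (insert a L) = Suc (nat a)" using aL Tidx_D[OF L] by simp
  moreover have "card (shift J 1) = nat a" using Tidx_D[OF J] by (simp add: card_shift)
  ultimately show False using e by simp
qed

lemma s_range: "-b \<le> s \<and> s \<le> a"
  using memH[of s] Tidx_D(3)[OF L] a1 b1 by force

lemma the_s: "(THE s'. insert a L = insert s' (shift J 1)) = s"
proof (rule the_equality)
  show "insert a L = insert s (shift J 1)" by (rule H)
next
  fix s' assume h: "insert a L = insert s' (shift J 1)"
  have "s' - 1 \<notin> J"
  proof
    assume "s' - 1 \<in> J"
    then have e: "insert a L = shift J 1" using h by auto
    have "card (insert a L) = Suc (nat a)" using aL Tidx_D[OF L] by simp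
    moreover have "card (shift J 1) = nat a" using Tidx_D[OF J] by (simp add: card_shift)
    ultimately show False using e by simp
  qed
  moreover have "s' \<in> insert s (shift J 1)" using h H by auto
  ultimately show "s' = s" by auto
qed

lemma Tmat_pair: "Tmat \<omega> a L J = eps s L * beta \<omega> s"
  unfolding Tmat_def using H the_s by (auto simp: Let_def)

lemma Ck_remove: "Ck a (Suc k) J - {int k + s} = Ck a k L"
proof (rule Set.set_eqI)
  fix x
  have m: "x - int k = a \<or> x - int k \<in> L \<longleftrightarrow> x - int k = s \<or> x - int (Suc k) \<in> J"
    using memH[of "x - int k"] by (simp add: algebra_simps)
  show "x \<in> Ck a (Suc k) J - {int k + s} \<longleftrightarrow> x \<in> Ck a k L"
    unfolding Ck_def using m by auto
qed

lemma in_C: "0 \<le> int k + s \<Longrightarrow> int k + s \<in> Ck a (Suc k) J"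
  unfolding Ck_def using s_notin s_range by auto

lemma s_low: assumes "\<forall>x\<in>L. - int k \<le> x" shows "0 \<le> int k + s"
  using memH[of s] assms a1 by auto

lemma card_sign:
  assumes lk: "\<forall>x\<in>L. - int k \<le> x"
  shows "int (card {x\<in>Ck a (Suc k) J. x < int k + s}) + int (card {x\<in>L. x < s}) = int k + s"
proof -
  define A1 where "A1 = {x\<in>Ck a (Suc k) J. x < int k + s}"
  define A2 where "A2 = shift {x\<in>L. x < s} (int k)"
  have fL: "finite L" using Tidx_D[OF L] by simp
  have c2: "card A2 = card {x\<in>L. x < s}" unfolding A2_def by (rule card_shift)
  have m: "x - int k = a \<or> x - int k \<in> L \<longleftrightarrow> x - int k = s \<or> x - int (Suc k) \<in> J" for x
    using memH[of "x - int k"] by (simp add: algebra_simps)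
  have U: "A1 \<union> A2 = {0..<int k + s}"
  proof (rule Set.set_eqI)
    fix x
    show "x \<in> A1 \<union> A2 \<longleftrightarrow> x \<in> {0..<int k + s}"
      unfolding A1_def A2_def Ck_def using m[of x] lk s_range by force
  qed
  have D: "A1 \<inter> A2 = {}"
    unfolding A1_def A2_def Ck_def using m lk s_range by force
  have f1: "finite A1" by (simp add: A1_def)
  have f2: "finite A2" using fL by (simp add: A2_def shift_def)
  have "card (A1 \<union> A2) = card A1 + card A2" using f1 f2 D by (rule card_Un_disjoint)
  then have "card A1 + card A2 = nat (int k + s)" using U by simp
  then show ?thesis using c2 s_low[OF lk] unfolding A1_def by linarith
qed

lemma sign_pair:
  assumes lk: "\<forall>x\<in>L. - int k \<le> x"
  shows "sg (Suc k) (Ck a (Suc k) J) * (-1)^(k + card {y\<in>Ck a (Suc k) J. y < int k + s})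
       = sg k (Ck a k L) * (eps s L :: 'a)"
proof -
  define C where "C = Ck a (Suc k) J"
  define c where "c = int k + s"
  define n1 where "n1 = card {y\<in>C. y < c}"
  define n2 where "n2 = card {x\<in>L. x < s}"
  have cC: "c \<in> C" unfolding c_def C_def by (rule in_C[OF s_low[OF lk]])
  have fC: "finite C" by (simp add: C_def)
  have n12: "int n1 = c - int n2" using card_sign[OF lk] unfolding n1_def n2_def C_def c_def by linarith
  have p: "(\<Prod>x\<in>C. pm x) = pm c * (\<Prod>x\<in>C - {c}. (pm x :: 'a))" by (rule prod.remove[OF fC cC])
  have "(sg (Suc k) C :: 'a) = pm c * (\<Prod>x\<in>C - {c}. pm x) * (pm (int k) * (\<Prod>i<k. pm (int i)))"
    unfolding sg_def p by (simp add: mult_ac)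
  also have "\<dots> = (pm c * pm (int k)) * sg k (C - {c})" by (simp add: sg_def mult_ac)
  finally have s1: "(sg (Suc k) C :: 'a) = (pm c * pm (int k)) * sg k (Ck a k L)"
    using Ck_remove unfolding C_def c_def by simp
  have e1: "((-1::'a) ^ (k + n1)) = pm (int k) * (pm c * pm (int n2))"
    unfolding pm_pow using n12 by (simp add: pm_add pm_diff)
  have e2: "(eps s L :: 'a) = pm (int n2)" unfolding eps_def n2_def pm_pow ..
  have "(sg (Suc k) C :: 'a) * (-1)^(k + n1) = sg k (Ck a k L) * ((pm c * pm c) * (pm (int k) * pm (int k)) * pm (int n2))"
    unfolding s1 e1 by (simp add: mult_ac)
  also have "\<dots> = sg k (Ck a k L) * eps s L" by (simp add: pm_sq e2)
  finally show ?thesis unfolding C_def c_def n1_def .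
qed

lemma g_eq_h:
  assumes lk: "\<forall>x\<in>L. - int k \<le> x"
  shows "sg k (Ck a k L) * Dc \<omega> k (Ck a k L) * Tmat \<omega> a L J
    = (sg (Suc k) (Ck a (Suc k) J) :: 'a) * (beta \<omega> (int k + s - int k) * (-1)^(k + card {y\<in>Ck a (Suc k) J. y < int k + s})
        * det (Dm \<omega> k (Ck a (Suc k) J - {int k + s})))"
proof -
  have D: "Dc \<omega> k (Ck a k L) = det (Dm \<omega> k (Ck a k L))"
    using card_Ck[OF L, of k] lk by (simp add: Dc_def)
  have sp: "(sg (Suc k) (Ck a (Suc k) J) :: 'a) * (-1)^(k + card {y\<in>Ck a (Suc k) J. y < int k + s}) = sg k (Ck a k L) * eps s L"
    by (rule sign_pair[OF lk])
  show ?thesis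
    unfolding D Tmat_pair Ck_remove
    using sp by (simp add: mult_ac)
qed

end

lemma finT: "finite (Tidx a b)"
  by (rule finite_subset[of _ "Pow {-b..a-1}"]) (auto simp: Tidx_def)

lemma c_side:
  assumes J: "J \<in> Tidx a b" and cC: "card (Ck a (Suc k) J) = Suc k" and c: "c \<in> Ck a (Suc k) J"
    and bz: "beta \<omega> (c - int k) \<noteq> 0" and dz: "det (Dm \<omega> k (Ck a (Suc k) J - {c})) \<noteq> 0"
  shows "insert (c - int k) (shift J 1) - {a} \<in> Tidx a b"
    "insert a (insert (c - int k) (shift J 1) - {a}) = insert (c - int k) (shift J 1)"
    "\<forall>x\<in>insert (c - int k) (shift J 1) - {a}. - int k \<le> x"
proof -
  define s where "s = c - int k"
  define C where "C = Ck a (Suc k) J"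
  define L where "L = insert s (shift J 1) - {a}"
  have fC: "finite C" by (simp add: C_def)
  have cs: "0 \<le> int k + s" "s \<le> a" "s - 1 \<notin> J" using c unfolding s_def Ck_def by (auto simp: algebra_simps)
  have sb: "-b \<le> s" using beta_z[of s] bz unfolding s_def by force
  have aI: "a \<in> insert s (shift J 1)"
  proof (rule ccontr)
    assume na: "a \<notin> insert s (shift J 1)"
    have "int k + a \<in> C - {c}" using na a1 unfolding C_def Ck_def s_def by auto
    moreover have "card (C - {c}) = k" using cC c unfolding C_def by simp
    ultimately have "det (Dm \<omega> k (C - {c})) = 0"
      using det_zero_column[of "C - {c}" k "int k + a" \<omega>] beta_z fC by force
    then show False using dz unfolding C_def by simp
  qed
  show H: "insert a (insert (c - int k) (shift J 1) - {a}) = insert (c - int k) (shift J 1)"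
    using aI unfolding s_def by auto
  have fJ: "finite J" using Tidx_D[OF J] by simp
  have cI: "card (insert s (shift J 1)) = Suc (nat a)"
  proof -
    have "s \<notin> shift J 1" using cs(3) by simp
    moreover have "finite (shift J 1)" using fJ by (simp add: shift_def)
    ultimately show ?thesis using Tidx_D[OF J] by (simp add: card_shift)
  qed
  have cL: "card L = nat a" unfolding L_def using cI aI fJ by (simp add: shift_def)
  have sub: "L \<subseteq> {-b..a-1}" unfolding L_def using cs sb Tidx_D(3)[OF J] by force
  show LT: "insert (c - int k) (shift J 1) - {a} \<in> Tidx a b"
    using cL sub unfolding Tidx_def L_def s_def by auto
  have "Ck a (Suc k) J - {int k + s} = Ck a k L"
    using Ck_remove[OF J, of L s k] LT H unfolding L_def s_def by simp
  then have "card (Ck a k L) = k" using cC c card_Diff_singleton[OF c] unfolding s_def by simp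
  then show "\<forall>x\<in>insert (c - int k) (shift J 1) - {a}. - int k \<le> x"
    using card_Ck[OF LT[folded s_def L_def]] unfolding L_def s_def by simp
qed

lemma step:
  assumes J: "J \<in> Tidx a b"
  shows "(\<Sum>L\<in>Tidx a b. sg k (Ck a k L) * Dc \<omega> k (Ck a k L) * Tmat \<omega> a L J)
       = sg (Suc k) (Ck a (Suc k) J) * Dc \<omega> (Suc k) (Ck a (Suc k) J)"
proof -
  define C where "C = Ck a (Suc k) J"
  define g where "g L = sg k (Ck a k L) * Dc \<omega> k (Ck a k L) * Tmat \<omega> a L J" for L
  define h where "h c = (sg (Suc k) C :: 'a) * (beta \<omega> (c - int k) * (-1)^(k + card {y\<in>C. y < c}) * det (Dm \<omega> k (C - {c})))" for c
  have gside: "\<exists>s. insert a L = insert s (shift J 1) \<and> (\<forall>x\<in>L. - int k \<le> x)"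
    if L: "L \<in> Tidx a b" and ne: "g L \<noteq> 0" for L
  proof -
    from ne have T: "Tmat \<omega> a L J \<noteq> 0" and D: "Dc \<omega> k (Ck a k L) \<noteq> 0" by (auto simp: g_def)
    from T obtain s where H: "insert a L = insert s (shift J 1)" by (auto simp: Tmat_def split: if_splits)
    from D have lk: "\<forall>x\<in>L. - int k \<le> x" using card_Ck[OF L] by (auto simp: Dc_def split: if_splits)
    show ?thesis using H lk by blast
  qed
  show ?thesis
  proof (cases "card C = Suc k")
    case False
    have "g L = 0" if L: "L \<in> Tidx a b" for L
    proof (rule ccontr)
      assume ne: "g L \<noteq> 0"
      obtain s where H: "insert a L = insert s (shift J 1)" and lk: "\<forall>x\<in>L. - int k \<le> x"
        using gside[OF L ne] by blast
      from False obtain y where y: "y \<in> J" "y < - int (Suc k)"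
        using card_Ck[OF J, of "Suc k"] unfolding C_def by force
      have "y + 1 \<in> insert a L" using H y by simp
      then have "y + 1 \<in> L" using y a1 by auto
      then show False using lk y by force
    qed
    then have "sum g (Tidx a b) = 0" by simp
    moreover have "Dc \<omega> (Suc k) C = 0" using False by (simp add: Dc_def)
    ultimately show ?thesis by (simp add: g_def C_def)
  next
    case True
    have fC: "finite C" by (simp add: C_def)
    have R: "sg (Suc k) C * Dc \<omega> (Suc k) C = sum h C"
      unfolding Dc_def using True det_expand[OF fC True, of \<omega>] by (simp add: h_def sum_distrib_left)
    have S1: "sum g (Tidx a b) = sum g {L\<in>Tidx a b. g L \<noteq> 0}"
      by (rule sum.mono_neutral_right) (auto simp: finT)
    have S2: "sum h C = sum h {c\<in>C. h c \<noteq> 0}"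
      by (rule sum.mono_neutral_right) (auto simp: fC)
    have S3: "sum g {L\<in>Tidx a b. g L \<noteq> 0} = sum h {c\<in>C. h c \<noteq> 0}"
    proof (rule sum.reindex_bij_witness[where i = "\<lambda>c. insert (c - int k) (shift J 1) - {a}"
          and j = "\<lambda>L. int k + (THE s. insert a L = insert s (shift J 1))"])
      fix L assume "L \<in> {L\<in>Tidx a b. g L \<noteq> 0}"
      then have L: "L \<in> Tidx a b" and ne: "g L \<noteq> 0" by auto
      obtain s where H: "insert a L = insert s (shift J 1)" and lk: "\<forall>x\<in>L. - int k \<le> x"
        using gside[OF L ne] by blast
      have th: "(THE s. insert a L = insert s (shift J 1)) = s" by (rule the_s[OF J L H])
      have gh: "h (int k + s) = g L"
        using g_eq_h[OF J L H lk] unfolding g_def h_def C_def by simp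
      show "insert (int k + (THE s. insert a L = insert s (shift J 1)) - int k) (shift J 1) - {a} = L"
        unfolding th using H aL[OF J L H] by auto
      show "int k + (THE s. insert a L = insert s (shift J 1)) \<in> {c \<in> C. h c \<noteq> 0}"
        unfolding th using in_C[OF J L H s_low[OF J L H lk]] gh ne by (simp add: C_def)
      show "h (int k + (THE s. insert a L = insert s (shift J 1))) = g L"
        unfolding th by (rule gh)
    next
      fix c assume "c \<in> {c\<in>C. h c \<noteq> 0}"
      then have c: "c \<in> C" and ne: "h c \<noteq> 0" by auto
      have bz: "beta \<omega> (c - int k) \<noteq> 0" and dz: "det (Dm \<omega> k (C - {c})) \<noteq> 0"
        using ne by (auto simp: h_def)
      note cs = c_side[OF J True[unfolded C_def] c[unfolded C_def] bz dz[unfolded C_def]]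
      define L where "L = insert (c - int k) (shift J 1) - {a}"
      have L: "L \<in> Tidx a b" and H: "insert a L = insert (c - int k) (shift J 1)"
        and lk: "\<forall>x\<in>L. - int k \<le> x" using cs unfolding L_def by auto
      have th: "(THE s. insert a L = insert s (shift J 1)) = c - int k" by (rule the_s[OF J L H])
      show "int k + (THE s. insert a (insert (c - int k) (shift J 1) - {a}) = insert s (shift J 1)) = c"
        using th unfolding L_def by simp
      have "g L = h c"
        using g_eq_h[OF J L H lk] unfolding g_def h_def C_def by simp
      then show "insert (c - int k) (shift J 1) - {a} \<in> {L \<in> Tidx a b. g L \<noteq> 0}"
        using L ne unfolding L_def by simp
    qed
    show ?thesis using S1 S2 S3 R unfolding g_def C_def by simp
  qed
qed

lemma invariant:
  assumes J: "J \<in> Tidx a b"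
  shows "matpow (Tidx a b) (Tmat \<omega> a) k {0..a-1} J = sg k (Ck a k J) * Dc \<omega> k (Ck a k J)"
  using J
proof (induction k arbitrary: J)
  case 0
  have C0: "Ck a 0 J = {0..a-1} - J"
    by (rule Set.set_eqI) (simp add: Ck_def)
  show ?case
  proof (cases "J = {0..a-1}")
    case True
    then have "Ck a 0 J = {}" using C0 by simp
    then show ?thesis using True by (simp add: Dc_def sg_def Dm_def)
  next
    case False
    have "card ({0..a-1} - J) \<noteq> 0"
    proof
      assume "card ({0..a-1} - J) = 0"
      then have sub: "{0..a-1} \<subseteq> J" by auto
      have "card {0..a-1} = card J" using Tidx_D[OF 0(1)] a1 by simp
      then have "{0..a-1} = J" using card_subset_eq[OF Tidx_D(1)[OF 0(1)] sub] by simp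
      then show False using False by simp
    qed
    then show ?thesis using False C0 by (auto simp: Dc_def)
  qed
next
  case (Suc k)
  have "matpow (Tidx a b) (Tmat \<omega> a) (Suc k) {0..a-1} J
      = (\<Sum>L\<in>Tidx a b. sg k (Ck a k L) * Dc \<omega> k (Ck a k L) * Tmat \<omega> a L J)"
    by (simp add: Suc.IH)
  also have "\<dots> = sg (Suc k) (Ck a (Suc k) J) * Dc \<omega> (Suc k) (Ck a (Suc k) J)"
    by (rule step[OF Suc.prems])
  finally show ?case .
qed

end

theorem mainTheorem4:
  fixes S :: "int set" and \<omega> :: "int \<Rightarrow> 'a::field_char_0" and a b :: int and k :: nat
  assumes "finite S" and "S \<noteq> {}"
    and "a = Max S" and "a \<ge> 1"
    and "b = - Min S" and "b \<ge> 1"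
    and "\<forall>s. s \<notin> S \<longrightarrow> \<omega> s = 0"
  shows "Fseq \<omega> k = matpow (Tidx a b) (Tmat \<omega> a) k {0..a-1} {0..a-1}"
proof -
  have wz: "\<omega> s = 0" if "s < -b \<or> s > a" for s
  proof -
    have "s \<notin> S"
    proof
      assume sS: "s \<in> S"
      then have "s \<le> a" "-b \<le> s" using assms(1,3,5) by auto
      then show False using that by auto
    qed
    then show ?thesis using assms(7) by simp
  qed
  have I0: "{0..a-1} \<in> Tidx a b" using assms(4,6) by (auto simp: Tidx_def)
  have CI: "Ck a k {0..a-1} = {0..<int k}"
    by (rule Set.set_eqI) (use assms(4) in \<open>auto simp: Ck_def\<close>)
  have M: "matpow (Tidx a b) (Tmat \<omega> a) k {0..a-1} {0..a-1} = sg k {0..<int k} * Dc \<omega> k {0..<int k}"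
    using invariant[OF assms(4,6) wz I0] CI by simp
  have sg1: "(sg k {0..<int k} :: 'a) = 1"
  proof -
    have "(\<Prod>c\<in>{0..<int k}. (pm c :: 'a)) = (\<Prod>i<k. pm (int i))"
      using prod.reindex[of int "{0..<k}" "pm :: int \<Rightarrow> 'a"]
      by (simp add: image_int_atLeastLessThan lessThan_atLeast0)
    then have "(sg k {0..<int k} :: 'a) = (\<Prod>i<k. pm (int i) * pm (int i))"
      by (simp add: sg_def prod.distrib)
    also have "\<dots> = 1" by (simp add: pm_sq)
    finally show ?thesis .
  qed
  have cl: "colf {0..<int k} j = int j" if "j < k" for j
  proof -
    have "{0..<int k} = {0..int k - 1}" by auto
    then show ?thesis unfolding colf_def using that by simp
  qed
  have DM: "Dm \<omega> k {0..<int k} = mat k k (\<lambda>(i,j). beta \<omega> (int j - int i))"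
    by (rule eq_matI) (auto simp: Dm_def cl)
  show ?thesis
  proof (cases "k = 0")
    case True
    then show ?thesis using M sg1 by (simp add: Fseq_def Dc_def Dm_def)
  next
    case False
    have "1\<^sub>m k - Amat \<omega> (k - 1) = mat k k (\<lambda>(i,j). beta \<omega> (int j - int i))"
      using False by (intro eq_matI) (auto simp: Amat_def beta_def)
    then show ?thesis using M sg1 False DM by (simp add: Fseq_def Dc_def)
  qed
qed

end
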